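(* Let $\lambda,\rho\in\mathbb{N}$ with $\lambda<\rho$. Then the class of monotone conjunctions on $\{0,1\}^n$ (and any concept class containing it) is not distribution-free $\rho$-robustly learnable with access to the example oracle and a $\lambda$-local equivalence query oracle.
   Context: A monotone conjunction is $x\mapsto\bigwedge_{i\in I}x_i$ for nonempty $I\subseteq[n]$. $B_r(x)$ is the Hamming ball of radius $r$ around $x\in\{0,1\}^n$. The example oracle $\mathsf{EX}(c,D)$ returns $(x,c(x))$, $x\sim D$. Given a sample $S$ from $\mathsf{EX}(c,D)$, the $\lambda$-local equivalence query oracle, queried with a point $x\in S$ and a hypothesis $h$, either confirms that $h$ and the target $c$ coincide on $B_\lambda(x)$ or returns some $z\in B_\lambda(x)$ with $c(z)\ne h(z)$; the learner may update $h$ after each counterexample. Robust risk: $\mathsf{R}_\rho(h,c)=\Pr_{x\sim D}[\exists z\in B_\rho(x):h(z)\ne c(z)]$. Distribution-free $\rho$-robust learnability means there is a learner which, for every distribution $D$ on $\{0,1\}^n$, every target $c$ in the class and every $\epsilon,\delta>0$, outputs with probability at least $1-\delta$ a hypothesis $h$ with $\mathsf{R}_\rho(h,c)\le\epsilon$. *)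

theory Defs
  imports "HOL-Probability.Probability"
begin

text \<open>Points of the Boolean hypercube {0,1}^n are Boolean lists of length n;
  concepts / hypotheses are arbitrary Boolean functions on Boolean lists
  (only their values on {0,1}^n matter).\<close>

type_synonym point = "bool list"
type_synonym concept = "point \<Rightarrow> bool"

definition cube :: "nat \<Rightarrow> point set" where
  "cube n = {x. length x = n}"

definition hamming :: "point \<Rightarrow> point \<Rightarrow> nat" where
  "hamming x z = card {i. i < length x \<and> x ! i \<noteq> z ! i}"

definition hball :: "nat \<Rightarrow> point \<Rightarrow> point set" where
  "hball r x = {z. length z = length x \<and> hamming x z \<le> r}"

definition mon_conj :: "nat \<Rightarrow> concept set" where
  "mon_conj n = {(\<lambda>x. \<forall>i\<in>I. x ! i) | I. I \<noteq> {} \<and> I \<subseteq> {..<n}}"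

definition robust_risk :: "nat \<Rightarrow> point pmf \<Rightarrow> concept \<Rightarrow> concept \<Rightarrow> real" where
  "robust_risk \<rho> D h c = measure_pmf.prob D {x. \<exists>z\<in>hball \<rho> x. h z \<noteq> c z}"

text \<open>The oracle's choice of
  counterexample is arbitrary (adversarial).\<close>
definition valid_leq :: "nat \<Rightarrow> concept \<Rightarrow> (point \<Rightarrow> concept \<Rightarrow> point option) \<Rightarrow> bool" where
  "valid_leq lam c Orc \<longleftrightarrow>
     (\<forall>x h. (Orc x h = None \<longrightarrow> (\<forall>z\<in>hball lam x. h z = c z)) \<and>
            (\<forall>z. Orc x h = Some z \<longrightarrow> z \<in> hball lam x \<and> h z \<noteq> c z))"

text \<open>Learners as (well-founded, possibly infinitely branching) interaction trees:
  output a hypothesis, draw a labelled example from EX(c,D), ask a local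
  equivalence query on a point with a hypothesis, or use internal randomness.\<close>
datatype learner =
    Output concept
  | Draw "point \<times> bool \<Rightarrow> learner"
  | Query point concept "point option \<Rightarrow> learner"
  | Rand "nat pmf" "nat \<Rightarrow> learner"

text \<open>Execution of a learner; the list S is the sample drawn so far.  A query on
  a point that is not in the sample is illegal and counts as failure (None).\<close>
primrec run :: "point pmf \<Rightarrow> concept \<Rightarrow> (point \<Rightarrow> concept \<Rightarrow> point option)
                 \<Rightarrow> learner \<Rightarrow> point list \<Rightarrow> concept option pmf" where
  "run D c Orc (Output h) S = return_pmf (Some h)"
| "run D c Orc (Draw f) S = bind_pmf D (\<lambda>x. run D c Orc (f (x, c x)) (S @ [x]))"
| "run D c Orc (Query x h f) S =
     (if x \<in> set S then run D c Orc (f (Orc x h)) S else return_pmf None)"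
| "run D c Orc (Rand p f) S = bind_pmf p (\<lambda>k. run D c Orc (f k) S)"

definition robustly_learnable_LEQ :: "nat \<Rightarrow> nat \<Rightarrow> (nat \<Rightarrow> concept set) \<Rightarrow> bool" where
  "robustly_learnable_LEQ lam \<rho> C \<longleftrightarrow>
     (\<forall>n. \<forall>\<epsilon>::real. \<forall>\<delta>::real. \<epsilon> > 0 \<longrightarrow> \<delta> > 0 \<longrightarrow>
       (\<exists>L. \<forall>D c Orc. set_pmf D \<subseteq> cube n \<longrightarrow> c \<in> C n \<longrightarrow> valid_leq lam c Orc \<longrightarrow>
          measure_pmf.prob (run D c Orc L []) {Some h | h. robust_risk \<rho> D h c \<le> \<epsilon>}
            \<ge> 1 - \<delta>))"

end

theory Submission
  imports Defs
begin

definition orc :: "nat \<Rightarrow> concept \<Rightarrow> point \<Rightarrow> concept \<Rightarrow> point option" where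
  "orc lam c x h = (if (\<forall>z\<in>hball lam x. h z = c z) then None
      else Some (SOME z. z \<in> hball lam x \<and> h z \<noteq> c z))"

lemma orc_none: "orc lam c x h = None \<Longrightarrow> \<forall>z\<in>hball lam x. h z = c z"
  unfolding orc_def by (simp split: if_splits)

lemma orc_some:
  assumes a: "orc lam c x h = Some z"
  shows "z \<in> hball lam x \<and> h z \<noteq> c z"
proof (cases "\<forall>z\<in>hball lam x. h z = c z")
  case True
  then show ?thesis using a unfolding orc_def by simp
next
  case False
  then have e: "\<exists>z. z \<in> hball lam x \<and> h z \<noteq> c z" by blast
  have "z = (SOME z. z \<in> hball lam x \<and> h z \<noteq> c z)"
    using a False unfolding orc_def by simp
  then show ?thesis using someI_ex[OF e] by simp
qed

lemma orc_valid: "valid_leq lam c (orc lam c)"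
  unfolding valid_leq_def
  apply (intro allI conjI impI)
    apply (erule orc_none)
   apply (drule orc_some, simp)
  apply (drule orc_some, simp)
  done

lemma orc_agree:
  assumes "\<And>z. z \<in> hball lam x \<Longrightarrow> c1 z = c2 z"
  shows "orc lam c1 x h = orc lam c2 x h"
proof -
  have 1: "(\<lambda>z. z \<in> hball lam x \<and> h z \<noteq> c1 z) = (\<lambda>z. z \<in> hball lam x \<and> h z \<noteq> c2 z)"
  proof (rule ext)
    fix z show "(z \<in> hball lam x \<and> h z \<noteq> c1 z) = (z \<in> hball lam x \<and> h z \<noteq> c2 z)"
      using assms[of z] by auto
  qed
  have 2: "(\<forall>z\<in>hball lam x. h z = c1 z) = (\<forall>z\<in>hball lam x. h z = c2 z)"
    using assms by auto
  show ?thesis unfolding orc_def 1 2 ..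
qed
lemma run_agree:
  assumes "\<And>z. z \<in> hball lam x0 \<Longrightarrow> c1 z = c2 z"
    and "x0 \<in> hball lam x0"
  shows "set S \<subseteq> {x0} \<Longrightarrow> run (return_pmf x0) c1 (orc lam c1) L S
        = run (return_pmf x0) c2 (orc lam c2) L S"
proof (induction L arbitrary: S)
  case (Output h)
  then show ?case by simp
next
  case (Draw f)
  have "c1 x0 = c2 x0" using assms by blast
  then show ?case using Draw by (simp add: bind_return_pmf)
next
  case (Query x h f)
  show ?case
  proof (cases "x \<in> set S")
    case True
    then have "x = x0" using Query.prems by auto
    then have "orc lam c1 x h = orc lam c2 x h" using orc_agree[OF assms(1)] by simp
    then show ?thesis using True Query by simp
  next
    case False
    then show ?thesis by simp
  qed
next
  case (Rand p f)
  then show ?case by (auto intro!: bind_pmf_cong)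
qed

lemma hamming_false:
  assumes "length z = n"
  shows "hamming (replicate n False) z = card {i. i < n \<and> z ! i}"
  unfolding hamming_def using assms by (intro arg_cong[where f=card]) auto

lemma risk_return:
  assumes "robust_risk \<rho> (return_pmf x0) h c \<le> 1/2"
  shows "\<forall>z\<in>hball \<rho> x0. h z = c z"
proof (rule ccontr)
  assume "\<not> ?thesis"
  then have "x0 \<in> {x. \<exists>z\<in>hball \<rho> x. h z \<noteq> c z}" by auto
  then have "robust_risk \<rho> (return_pmf x0) h c = 1"
    unfolding robust_risk_def by (simp add: measure_return)
  then show False using assms by simp
qed

theorem theorem6p2:
  fixes lam \<rho> :: nat and C :: "nat \<Rightarrow> (bool list \<Rightarrow> bool) set"
  assumes "lam < \<rho>"
    and "\<And>n. mon_conj n \<subseteq> C n"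
  shows "\<not> robustly_learnable_LEQ lam \<rho> C"
proof
  assume A: "robustly_learnable_LEQ lam \<rho> C"
  define n where "n = lam + 2"
  define x0 where "x0 = replicate n False"
  define D where "D = return_pmf x0"
  define c1 :: concept where "c1 = (\<lambda>x. \<forall>i\<in>{..<lam+1}. x ! i)"
  define c2 :: concept where "c2 = (\<lambda>x. \<forall>i\<in>{..<lam+2}. x ! i)"
  have ex: "\<exists>L. \<forall>D c Orc. set_pmf D \<subseteq> cube n \<longrightarrow> c \<in> C n \<longrightarrow> valid_leq lam c Orc \<longrightarrow>
          measure_pmf.prob (run D c Orc L []) {Some h | h. robust_risk \<rho> D h c \<le> 1/2}
            \<ge> 1 - 1/4"
    using spec[OF spec[OF spec[OF A[unfolded robustly_learnable_LEQ_def], of n], of "1/2"], of "1/4"]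
    by simp
  then obtain L where L0: "\<forall>D c Orc. set_pmf D \<subseteq> cube n \<longrightarrow> c \<in> C n \<longrightarrow> valid_leq lam c Orc \<longrightarrow>
          measure_pmf.prob (run D c Orc L []) {Some h | h. robust_risk \<rho> D h c \<le> 1/2}
            \<ge> 1 - 1/4" by (rule exE)
  have L: "\<And>D c Orc. set_pmf D \<subseteq> cube n \<Longrightarrow> c \<in> C n \<Longrightarrow> valid_leq lam c Orc \<Longrightarrow>
          measure_pmf.prob (run D c Orc L []) {Some h | h. robust_risk \<rho> D h c \<le> 1/2}
            \<ge> 1 - 1/4" using L0 by blast
  have cube: "set_pmf D \<subseteq> cube n" unfolding D_def x0_def cube_def by simp
  have c1C: "c1 \<in> C n"
  proof -
    have "c1 \<in> mon_conj n" unfolding mon_conj_def c1_def n_def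
      by (rule CollectI, rule exI[of _ "{..<lam+1}"]) auto
    then show ?thesis using assms(2) by blast
  qed
  have c2C: "c2 \<in> C n"
  proof -
    have "c2 \<in> mon_conj n" unfolding mon_conj_def c2_def n_def
      by (rule CollectI, rule exI[of _ "{..<lam+2}"]) auto
    then show ?thesis using assms(2) by blast
  qed
  have ball0: "c1 z = False" if "z \<in> hball lam x0" for z
  proof (rule ccontr)
    assume "c1 z \<noteq> False"
    then have s: "{..<lam+1} \<subseteq> {i. i < n \<and> z ! i}" unfolding c1_def n_def by auto
    have lz: "length z = n" using that unfolding hball_def x0_def by simp
    have "card {..<lam+1} \<le> card {i. i < n \<and> z ! i}"
      by (rule card_mono[OF _ s]) auto
    also have "\<dots> = hamming x0 z" using hamming_false[OF lz] x0_def by simp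
    also have "\<dots> \<le> lam" using that unfolding hball_def by simp
    finally show False by simp
  qed
  have agree: "c1 z = c2 z" if "z \<in> hball lam x0" for z
    using ball0[OF that] unfolding c1_def c2_def by auto
  have x0b: "x0 \<in> hball lam x0" unfolding hball_def hamming_def by simp
  define z where "z = replicate (lam+1) True @ [False]"
  have lz: "length z = n" unfolding z_def n_def by simp
  have zi: "z ! i = (i < lam+1)" if "i < n" for i
  proof (cases "i < lam+1")
    case True then show ?thesis unfolding z_def by (simp add: nth_append del: replicate_Suc)
  next
    case False then have "i = lam+1" using that n_def by simp
    then show ?thesis unfolding z_def by (simp add: nth_append del: replicate_Suc)
  qed
  have "{i. i < n \<and> z ! i} = {..<lam+1}"
    using zi unfolding n_def by auto
  then have "hamming x0 z = lam + 1" using hamming_false[OF lz] x0_def by simp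
  then have zb: "z \<in> hball \<rho> x0" using assms(1) lz unfolding hball_def x0_def by simp
  have zd: "c1 z \<noteq> c2 z" using zi unfolding c1_def c2_def n_def by auto
  define P where "P = run D c1 (orc lam c1) L []"
  have P2: "P = run D c2 (orc lam c2) L []"
    unfolding P_def D_def by (rule run_agree[OF agree x0b]) auto
  define E1 where "E1 = {Some h | h. robust_risk \<rho> D h c1 \<le> 1/2}"
  define E2 where "E2 = {Some h | h. robust_risk \<rho> D h c2 \<le> 1/2}"
  have p1: "measure_pmf.prob P E1 \<ge> 3/4"
    using L[OF cube c1C orc_valid] unfolding P_def E1_def by simp
  have p2: "measure_pmf.prob P E2 \<ge> 3/4"
    using L[OF cube c2C orc_valid] unfolding P2 E2_def by simp
  have disj: "E1 \<subseteq> UNIV - E2"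
  proof
    fix y assume "y \<in> E1"
    then obtain h where y: "y = Some h" and r1: "robust_risk \<rho> D h c1 \<le> 1/2"
      unfolding E1_def by auto
    have "y \<notin> E2"
    proof
      assume "y \<in> E2"
      then have r2: "robust_risk \<rho> D h c2 \<le> 1/2" unfolding E2_def y by auto
      have "h z = c1 z" using risk_return[OF r1[unfolded D_def]] zb by blast
      moreover have "h z = c2 z" using risk_return[OF r2[unfolded D_def]] zb by blast
      ultimately show False using zd by simp
    qed
    then show "y \<in> UNIV - E2" by simp
  qed
  have "measure_pmf.prob P E1 \<le> measure_pmf.prob P (UNIV - E2)"
    by (rule measure_pmf.finite_measure_mono[OF disj]) simp
  also have "\<dots> = 1 - measure_pmf.prob P E2"
    using measure_pmf.prob_compl[of E2 P] by simp
  finally show False using p1 p2 by simp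
qed

end
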